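(* Let $S$ be a standard tableau of type $(i_1,\dots,i_m)$ and let $\widetilde Y_S:=\mathrm{pr}(Y_{\varphi(S)})$ be the corresponding irreducible component of the Spaltenstein variety $\mathrm{Sp}(i_1,\dots,i_m)$. Then $\widetilde Y_S$ consists of all partial flags $F_{i_1}\subset\dots\subset F_{i_m}$ of type $(i_1,\dots,i_m)$ whose subspaces satisfy: (1) for each $l$, $F_{i_l}\subset N^{-1}(F_{i_{l-1}})$; (2) if $i_l$ is in the top row of $S$, $i_l-1$ is in the bottom row and $i_l-1$ is not a double entry, then $F_{i_l}=N^{-1}(F_{i_l-2})$; (3) if $i_l$ and $i_l-1$ are both in the top row of $S$, then: if $F_{i_l-1}=N^{-d}(F_r)$ where $r$ is in the bottom row and not a double entry, then $F_{i_l}=N^{-d-1}(F_{r-1})$; and if $F_{i_l-1}=N^{-d}(\operatorname{im}N^{n-k-j})$ with $0\le j<n-2k$, then $F_{i_l}=N^{-d}(\operatorname{im}N^{n-k-j-1})$. Here $0$ is regarded as lying in the top row and $F_0=\{0\}=\operatorname{im}N^{n-k}$, $F_{i_0}=\{0\}$.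
   Context: Fix integers $n\ge 2k\ge 0$; $V$ is an $n$-dimensional complex vector space with basis $e_1,\dots,e_{n-k},f_1,\dots,f_k$ and $N$ is the nilpotent endomorphism $Ne_i=e_{i-1}$, $Nf_i=f_{i-1}$, $e_0=f_0=0$. $N^{-d}(U)$ denotes the preimage of $U$ under $N^d$. A partial flag of type $(i_1,\dots,i_m)$ ($0<i_1<\dots<i_m=n$) is a chain $F_{i_1}\subset\dots\subset F_{i_m}$ with $\dim F_{i_l}=i_l$; it is $N$-invariant if $NF_{i_l}\subset F_{i_{l-1}}$ ($F_{i_0}=\{0\}$). $\mathrm{Sp}(i_1,\dots,i_m)$ is the variety of $N$-invariant partial flags of that type; $Y=\mathrm{Sp}(1,\dots,n)$ is the Springer fibre; $\mathrm{pr}$ forgets the $F_j$ with $j\notin\{i_1,\dots,i_m\}$. Tableaux: a tableau of type $(i_1,\dots,i_m)$ is a two-row Young diagram (top row $n-k$ boxes, bottom row $k$ boxes) in which $i_l$ occurs exactly $i_l-i_{l-1}$ times; it is row strict if entries strictly decrease along rows, standard if moreover each column's top entry is $\ge$ its bottom entry. An entry $i_l$ with $i_l-i_{l-1}=2$ is a double entry (it appears in both rows). $\varphi(S)$ is obtained from $S$ by replacing the bottom-row copy of each double entry $i_l$ by $i_l-1$. For a standard tableau $\sigma$ of type $(1,\dots,n)$, $Y_\sigma$ is the irreducible component of $Y$ attached to $\sigma$ by the Spaltenstein–Vargas bijection; explicitly (Fung), with $F_0=\{0\}=\operatorname{im}N^{n-k}$ and $0$ in the top row, $Y_\sigma$ consists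 of the full flags with: $F_i\subset N^{-1}(F_{i-1})$ for all $i$; $F_i=N^{-1}(F_{i-2})$ if $i$ is in the top row and $i-1$ in the bottom row of $\sigma$; and if $i,i-1$ are both in the top row: $F_i=N^{-d-1}(F_{r-1})$ whenever $F_{i-1}=N^{-d}(F_r)$ with $r$ in the bottom row, and $F_i=N^{-d}(\operatorname{im}N^{n-k-j-1})$ whenever $F_{i-1}=N^{-d}(\operatorname{im}N^{n-k-j})$, $0\le j<n-2k$. *)

theory Defs
  imports Complex_Main "HOL-Library.Function_Algebras"
begin

text \<open>The basis vector e_i (1 <= i <= n-k) is the unit vector at index i-1, and
f_i (1 <= i <= k) is the unit vector at index n-k+i-1.\<close>

type_synonym vec = "nat \<Rightarrow> complex"

definition cscale :: "complex \<Rightarrow> vec \<Rightarrow> vec" where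
  "cscale c v = (\<lambda>i. c * v i)"

definition Vsp :: "nat \<Rightarrow> vec set" where
  "Vsp n = {v. \<forall>i\<ge>n. v i = 0}"

definition e_vec :: "nat \<Rightarrow> nat \<Rightarrow> vec" where
  "e_vec n i = (\<lambda>j. if j + 1 = i then 1 else 0)"

definition f_vec :: "nat \<Rightarrow> nat \<Rightarrow> nat \<Rightarrow> vec" where
  "f_vec n k i = (\<lambda>j. if j + 1 = n - k + i then 1 else 0)"

text \<open>N e_i = e_(i-1), N f_i = f_(i-1), e_0 = f_0 = 0, extended linearly:
the coefficient of e_(i-1) (resp. f_(i-1)) in N v is the coefficient of
e_i (resp. f_i) in v.\<close>

definition Nop :: "nat \<Rightarrow> nat \<Rightarrow> vec \<Rightarrow> vec" where
  "Nop n k v = (\<lambda>j. if j + 1 < n - k then v (j + 1)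
                     else if n - k \<le> j \<and> j + 1 < n then v (j + 1)
                     else 0)"

definition is_subspace :: "nat \<Rightarrow> vec set \<Rightarrow> bool" where
  "is_subspace n W \<longleftrightarrow> W \<subseteq> Vsp n \<and> module.subspace cscale W"

definition sdim :: "vec set \<Rightarrow> nat" where
  "sdim W = vector_space.dim cscale W"

definition Npre :: "nat \<Rightarrow> nat \<Rightarrow> nat \<Rightarrow> vec set \<Rightarrow> vec set" where
  "Npre n k d U = {v \<in> Vsp n. (Nop n k ^^ d) v \<in> U}"

definition Nim :: "nat \<Rightarrow> nat \<Rightarrow> nat \<Rightarrow> vec set" where
  "Nim n k j = (Nop n k ^^ j) ` Vsp n"

definition valid_type :: "nat \<Rightarrow> nat list \<Rightarrow> bool" where
  "valid_type n is \<longleftrightarrow> is \<noteq> [] \<and> sorted_wrt (<) is \<and> 0 < hd is \<and> last is = n"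

text \<open>prevt is (i_l) = i_(l-1), with i_0 = 0.\<close>
definition prevt :: "nat list \<Rightarrow> nat \<Rightarrow> nat" where
  "prevt is x = Max ({0} \<union> {y \<in> set is. y < x})"

definition full_type :: "nat \<Rightarrow> nat list" where
  "full_type n = [1..<n+1]"

text \<open>A partial flag of type is is a function G with G j = F_j for j in is,
G 0 = F_0 = {0}, and G j = {} (junk) at all other indices.\<close>
definition pflag :: "nat \<Rightarrow> nat list \<Rightarrow> (nat \<Rightarrow> vec set) \<Rightarrow> bool" where
  "pflag n is G \<longleftrightarrow>
     G 0 = {0} \<and>
     (\<forall>j\<in>set is. is_subspace n (G j) \<and> sdim (G j) = j) \<and>
     (\<forall>j\<in>set is. G (prevt is j) \<subseteq> G j) \<and>
     (\<forall>j. j \<notin> insert 0 (set is) \<longrightarrow> G j = {})"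

definition N_invariant :: "nat \<Rightarrow> nat \<Rightarrow> nat list \<Rightarrow> (nat \<Rightarrow> vec set) \<Rightarrow> bool" where
  "N_invariant n k is G \<longleftrightarrow> (\<forall>j\<in>set is. Nop n k ` G j \<subseteq> G (prevt is j))"

definition Sp :: "nat \<Rightarrow> nat \<Rightarrow> nat list \<Rightarrow> (nat \<Rightarrow> vec set) set" where
  "Sp n k is = {G. pflag n is G \<and> N_invariant n k is G}"

definition Springer :: "nat \<Rightarrow> nat \<Rightarrow> (nat \<Rightarrow> vec set) set" where
  "Springer n k = Sp n k (full_type n)"

definition pr :: "nat list \<Rightarrow> (nat \<Rightarrow> vec set) \<Rightarrow> (nat \<Rightarrow> vec set)" where
  "pr is F = (\<lambda>j. if j \<in> insert 0 (set is) then F j else {})"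

text \<open>A tableau is a pair (top row, bottom row), rows read left to right.\<close>
type_synonym tableau = "nat list \<times> nat list"

definition is_tableau :: "nat \<Rightarrow> nat \<Rightarrow> nat list \<Rightarrow> tableau \<Rightarrow> bool" where
  "is_tableau n k is S \<longleftrightarrow>
     length (fst S) = n - k \<and> length (snd S) = k \<and>
     set (fst S @ snd S) \<subseteq> set is \<and>
     (\<forall>x\<in>set is. count_list (fst S @ snd S) x = x - prevt is x)"

definition row_strict :: "tableau \<Rightarrow> bool" where
  "row_strict S \<longleftrightarrow> sorted_wrt (>) (fst S) \<and> sorted_wrt (>) (snd S)"

definition standard_tab :: "tableau \<Rightarrow> bool" where
  "standard_tab S \<longleftrightarrow> row_strict S \<and>
     (\<forall>j < length (snd S). snd S ! j \<le> fst S ! j)"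

definition in_top :: "tableau \<Rightarrow> nat \<Rightarrow> bool" where
  "in_top S x \<longleftrightarrow> x = 0 \<or> x \<in> set (fst S)"

definition in_bot :: "tableau \<Rightarrow> nat \<Rightarrow> bool" where
  "in_bot S x \<longleftrightarrow> x \<in> set (snd S)"

definition double_entry :: "nat list \<Rightarrow> nat \<Rightarrow> bool" where
  "double_entry is x \<longleftrightarrow> x \<in> set is \<and> x - prevt is x = 2"

definition phi :: "nat list \<Rightarrow> tableau \<Rightarrow> tableau" where
  "phi is S = (fst S, map (\<lambda>x. if double_entry is x then x - 1 else x) (snd S))"

section \<open>Components of the Springer fibre (Fung's description)\<close>

definition Ycomp :: "nat \<Rightarrow> nat \<Rightarrow> tableau \<Rightarrow> (nat \<Rightarrow> vec set) set" where
  "Ycomp n k \<sigma> = {F \<in> Springer n k. \<forall>i\<in>{1..n}.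
     F i \<subseteq> Npre n k 1 (F (i - 1)) \<and>
     (in_top \<sigma> i \<and> in_bot \<sigma> (i - 1) \<longrightarrow> F i = Npre n k 1 (F (i - 2))) \<and>
     (in_top \<sigma> i \<and> in_top \<sigma> (i - 1) \<longrightarrow>
        (\<forall>d r. in_bot \<sigma> r \<and> F (i - 1) = Npre n k d (F r) \<longrightarrow>
               F i = Npre n k (d + 1) (F (r - 1))) \<and>
        (\<forall>d j. j < n - 2 * k \<and> F (i - 1) = Npre n k d (Nim n k (n - k - j)) \<longrightarrow>
               F i = Npre n k d (Nim n k (n - k - j - 1))))}"

end

theory Submission
  imports Defs
begin


lemma count_distinct: "distinct xs \<Longrightarrow> count_list xs x = (if x \<in> set xs then 1 else 0)"
  by (induction xs) auto

lemma vt_props: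
  assumes "valid_type n is" "j \<in> set is"
  shows "0 < j" "j \<le> n"
proof -
  have s: "sorted_wrt (<) is" and h: "0 < hd is" and l: "last is = n" and ne: "is \<noteq> []"
    using assms(1) unfolding valid_type_def by auto
  show "0 < j"
  proof (cases "j = hd is")
    case True then show ?thesis using h by simp
  next
    case False
    then have "hd is < j" using s assms(2) ne
      by (cases "is") auto
    then show ?thesis using h by simp
  qed
  show "j \<le> n"
  proof (cases "j = last is")
    case True then show ?thesis using l by simp
  next
    case False
    obtain ys where ys: "is = ys @ [last is]" using ne by (metis append_butlast_last_id)
    then have "j \<in> set ys" using assms(2) False by (metis Un_iff empty_iff empty_set set_ConsD set_append)
    then have "j < last is" using s ys sorted_wrt_append[of "(<)" ys "[last is]"] by auto
    then show ?thesis using l by simp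
  qed
qed

lemma prevt_props:
  assumes "valid_type n is" "j \<in> set is"
  shows "prevt is j < j" "prevt is j \<in> insert 0 (set is)"
    "\<And>y. y \<in> set is \<Longrightarrow> y < j \<Longrightarrow> y \<le> prevt is j"
proof -
  let ?A = "{0} \<union> {y \<in> set is. y < j}"
  have fin: "finite ?A" by auto
  have ne: "?A \<noteq> {}" by auto
  have "Max ?A \<in> ?A" using Max_in[OF fin ne] .
  then have m: "prevt is j \<in> ?A" unfolding prevt_def .
  have "0 < j" using vt_props assms by blast
  with m show "prevt is j < j" by auto
  from m show "prevt is j \<in> insert 0 (set is)" by auto
  show "\<And>y. y \<in> set is \<Longrightarrow> y < j \<Longrightarrow> y \<le> prevt is j" unfolding prevt_def
    using fin by (intro Max_ge) auto
qed

lemma set_full_type: "set (full_type n) = {1..n}"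
  unfolding full_type_def by auto

lemma prevt_full: assumes "j \<in> {1..n}" shows "prevt (full_type n) j = j - 1"
proof -
  have "{0} \<union> {y \<in> set (full_type n). y < j} = {0..j-1}"
    using assms unfolding set_full_type by auto
  moreover have "Max {0..j-1} = j - 1" by (rule Max_eqI) auto
  ultimately show ?thesis unfolding prevt_def by simp
qed

lemma sw_gt_distinct: "sorted_wrt (>) (xs::nat list) \<Longrightarrow> distinct xs"
  by (induction xs) auto

lemma springer_mono:
  assumes "F \<in> Springer n k" "a \<le> b" "b \<le> n"
  shows "F a \<subseteq> F b"
  using assms(2,3)
proof (induction b)
  case 0 then show ?case by simp
next
  case (Suc b)
  show ?case
  proof (cases "a = Suc b")
    case True then show ?thesis by simp
  next
    case False
    then have "F a \<subseteq> F b" using Suc by simp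
    moreover have "F b \<subseteq> F (Suc b)"
    proof -
      have "Suc b \<in> set (full_type n)" using Suc unfolding set_full_type by auto
      then have "F (prevt (full_type n) (Suc b)) \<subseteq> F (Suc b)"
        using assms(1) unfolding Springer_def Sp_def pflag_def by blast
      then show ?thesis using prevt_full[of "Suc b" n] Suc by simp
    qed
    ultimately show ?thesis by blast
  qed
qed

lemma tab_count:
  assumes "valid_type n is" "is_tableau n k is S" "standard_tab S" "x \<in> set is"
  shows "x - prevt is x = (if x \<in> set (fst S) then 1 else 0) + (if x \<in> set (snd S) then 1 else 0)"
proof -
  have d1: "distinct (fst S)" and d2: "distinct (snd S)"
    using assms(3) unfolding standard_tab_def row_strict_def
    by (auto intro: sw_gt_distinct)
  have "count_list (fst S @ snd S) x = x - prevt is x"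
    using assms(2,4) unfolding is_tableau_def by blast
  then show ?thesis using count_distinct[OF d1] count_distinct[OF d2] by simp
qed

lemma tab_in_is:
  assumes "is_tableau n k is S" "x \<in> set (fst S) \<or> x \<in> set (snd S)"
  shows "x \<in> set is"
  using assms unfolding is_tableau_def by auto

lemma tab_double:
  assumes "valid_type n is" "is_tableau n k is S" "standard_tab S" "double_entry is x"
  shows "x \<in> set (fst S)" "x \<in> set (snd S)" "prevt is x = x - 2"
proof -
  have x: "x \<in> set is" "x - prevt is x = 2" using assms(4) unfolding double_entry_def by auto
  from tab_count[OF assms(1-3) x(1)] x(2)
  show "x \<in> set (fst S)" "x \<in> set (snd S)" by (auto split: if_splits)
  show "prevt is x = x - 2" using x(2) prevt_props(1)[OF assms(1) x(1)] by simp
qed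

lemma tab_single:
  assumes "valid_type n is" "is_tableau n k is S" "standard_tab S" "x \<in> set is" "\<not> double_entry is x"
  shows "prevt is x = x - 1"
proof -
  have "x - prevt is x \<le> 2" using tab_count[OF assms(1-4)] by auto
  moreover have "x - prevt is x \<noteq> 2" using assms(4,5) unfolding double_entry_def by auto
  moreover have "prevt is x < x" using prevt_props(1)[OF assms(1,4)] .
  ultimately show ?thesis by linarith
qed

lemma in_top_phi: "in_top (phi is S) x = in_top S x"
  unfolding in_top_def phi_def by simp

lemma in_bot_phi_single: "in_bot S x \<Longrightarrow> \<not> double_entry is x \<Longrightarrow> in_bot (phi is S) x"
  unfolding in_bot_def phi_def by force

lemma in_bot_phi_double: "in_bot S x \<Longrightarrow> double_entry is x \<Longrightarrow> in_bot (phi is S) (x - 1)"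
  unfolding in_bot_def phi_def by force

lemma pr_eq: "j \<in> insert 0 (set is) \<Longrightarrow> pr is F j = F j"
  unfolding pr_def by simp

definition RHS :: "nat \<Rightarrow> nat \<Rightarrow> nat list \<Rightarrow> tableau \<Rightarrow> (nat \<Rightarrow> vec set) set" where
 "RHS n k is S = {G. pflag n is G \<and>
        (\<forall>i\<in>set is. G i \<subseteq> Npre n k 1 (G (prevt is i))) \<and>
        (\<forall>i\<in>set is. in_top S i \<and> in_bot S (i - 1) \<and> \<not> double_entry is (i - 1) \<longrightarrow>
             G i = Npre n k 1 (G (i - 2))) \<and>
        (\<forall>i\<in>set is. in_top S i \<and> in_top S (i - 1) \<longrightarrow>
             (\<forall>d r. in_bot S r \<and> \<not> double_entry is r \<and> G (i - 1) = Npre n k d (G r) \<longrightarrow>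
                    G i = Npre n k (d + 1) (G (r - 1))) \<and>
             (\<forall>d j. j < n - 2 * k \<and> G (i - 1) = Npre n k d (Nim n k (n - k - j)) \<longrightarrow>
                    G i = Npre n k d (Nim n k (n - k - j - 1))))}"

lemma subset_dir:
  assumes vt: "valid_type n is" and tab: "is_tableau n k is S" and st: "standard_tab S"
    and FY: "F \<in> Ycomp n k (phi is S)"
  shows "pr is F \<in> RHS n k is S"
proof -
  let ?G = "pr is F"
  have Fsp: "F \<in> Springer n k" using FY unfolding Ycomp_def by blast
  have Fc: "\<And>i. i \<in> {1..n} \<Longrightarrow>
     F i \<subseteq> Npre n k 1 (F (i - 1)) \<and>
     (in_top (phi is S) i \<and> in_bot (phi is S) (i - 1) \<longrightarrow> F i = Npre n k 1 (F (i - 2))) \<and>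
     (in_top (phi is S) i \<and> in_top (phi is S) (i - 1) \<longrightarrow>
        (\<forall>d r. in_bot (phi is S) r \<and> F (i - 1) = Npre n k d (F r) \<longrightarrow>
               F i = Npre n k (d + 1) (F (r - 1))) \<and>
        (\<forall>d j. j < n - 2 * k \<and> F (i - 1) = Npre n k d (Nim n k (n - k - j)) \<longrightarrow>
               F i = Npre n k d (Nim n k (n - k - j - 1))))"
    using FY unfolding Ycomp_def by blast
  have Fpf: "pflag n (full_type n) F" using Fsp unfolding Springer_def Sp_def by blast
  have inn: "\<And>j. j \<in> set is \<Longrightarrow> j \<in> {1..n}" using vt_props[OF vt] by fastforce
  have p1: "pflag n is ?G"
    unfolding pflag_def
  proof (intro conjI ballI allI impI)
    show "?G 0 = {0}" using Fpf unfolding pflag_def pr_def by simp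
  next
    fix j assume j: "j \<in> set is"
    then have "j \<in> set (full_type n)" using inn set_full_type by blast
    then show "is_subspace n (?G j)" "sdim (?G j) = j" using Fpf j unfolding pflag_def pr_def by auto
  next
    fix j assume j: "j \<in> set is"
    have "prevt is j \<in> insert 0 (set is)" "prevt is j < j" using prevt_props[OF vt j] by auto
    moreover have "j \<le> n" using inn j by auto
    ultimately show "?G (prevt is j) \<subseteq> ?G j" using springer_mono[OF Fsp] j unfolding pr_def by auto
  next
    fix j assume "j \<notin> insert 0 (set is)" then show "?G j = {}" unfolding pr_def by simp
  qed
  have p2: "\<forall>i\<in>set is. ?G i \<subseteq> Npre n k 1 (?G (prevt is i))"
  proof
    fix i assume i: "i \<in> set is"
    have pi: "prevt is i \<in> insert 0 (set is)" using prevt_props[OF vt i] by auto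
    show "?G i \<subseteq> Npre n k 1 (?G (prevt is i))"
    proof (cases "double_entry is i")
      case True
      note D = tab_double[OF vt tab st True]
      have "in_top (phi is S) i" using D unfolding in_top_phi by (simp add: in_top_def)
      moreover have "in_bot (phi is S) (i - 1)" using in_bot_phi_double[OF _ True] D in_bot_def by auto
      ultimately have "F i = Npre n k 1 (F (i - 2))" using Fc[OF inn[OF i]] by blast
      then show ?thesis using D(3) pr_eq[OF pi] pr_eq[of i "is"] i by auto
    next
      case False
      have "prevt is i = i - 1" using tab_single[OF vt tab st i False] .
      then show ?thesis using Fc[OF inn[OF i]] pr_eq[OF pi] pr_eq[of i "is"] i by auto
    qed
  qed
  have p3: "\<forall>i\<in>set is. in_top S i \<and> in_bot S (i - 1) \<and> \<not> double_entry is (i - 1) \<longrightarrow>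
             ?G i = Npre n k 1 (?G (i - 2))"
  proof (intro ballI impI)
    fix i assume i: "i \<in> set is" and h: "in_top S i \<and> in_bot S (i - 1) \<and> \<not> double_entry is (i - 1)"
    have i1: "i - 1 \<in> set is" using h tab_in_is[OF tab] unfolding in_bot_def by blast
    have "prevt is (i - 1) = i - 1 - 1" using tab_single[OF vt tab st i1] h by blast
    then have pi: "i - 2 \<in> insert 0 (set is)" using prevt_props(2)[OF vt i1] by (simp add: numeral_2_eq_2)
    have "in_top (phi is S) i" "in_bot (phi is S) (i - 1)"
      using h in_top_phi in_bot_phi_single by auto
    then have "F i = Npre n k 1 (F (i - 2))" using Fc[OF inn[OF i]] by blast
    then show "?G i = Npre n k 1 (?G (i - 2))" using pr_eq[OF pi] pr_eq[of i "is"] i by auto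
  qed
  have p4: "\<forall>i\<in>set is. in_top S i \<and> in_top S (i - 1) \<longrightarrow>
             (\<forall>d r. in_bot S r \<and> \<not> double_entry is r \<and> ?G (i - 1) = Npre n k d (?G r) \<longrightarrow>
                    ?G i = Npre n k (d + 1) (?G (r - 1))) \<and>
             (\<forall>d j. j < n - 2 * k \<and> ?G (i - 1) = Npre n k d (Nim n k (n - k - j)) \<longrightarrow>
                    ?G i = Npre n k d (Nim n k (n - k - j - 1)))"
  proof (intro ballI impI conjI allI)
    fix i assume i: "i \<in> set is" and h: "in_top S i \<and> in_top S (i - 1)"
    have i1: "i - 1 \<in> insert 0 (set is)" using h tab_in_is[OF tab] unfolding in_top_def by blast
    have hp: "in_top (phi is S) i \<and> in_top (phi is S) (i - 1)" using h in_top_phi by auto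
    have Gi: "?G i = F i" "?G (i - 1) = F (i - 1)" using pr_eq[OF i1] pr_eq[of i "is"] i by auto
    note C = Fc[OF inn[OF i]]
    {
      fix d r assume a: "in_bot S r \<and> \<not> double_entry is r \<and> ?G (i - 1) = Npre n k d (?G r)"
      have r: "r \<in> set is" using a tab_in_is[OF tab] unfolding in_bot_def by blast
      have "prevt is r = r - 1" using tab_single[OF vt tab st r] a by blast
      then have r1: "r - 1 \<in> insert 0 (set is)" using prevt_props(2)[OF vt r] by simp
      have "in_bot (phi is S) r" using a in_bot_phi_single by blast
      moreover have "F (i - 1) = Npre n k d (F r)" using a Gi pr_eq[of r "is"] r by auto
      ultimately have "F i = Npre n k (d + 1) (F (r - 1))" using C hp by blast
      then show "?G i = Npre n k (d + 1) (?G (r - 1))" using Gi pr_eq[OF r1] by simp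
    }
    {
      fix d j assume a: "j < n - 2 * k \<and> ?G (i - 1) = Npre n k d (Nim n k (n - k - j))"
      then show "?G i = Npre n k d (Nim n k (n - k - j - 1))" using C hp Gi by auto
    }
  qed
  show ?thesis unfolding RHS_def using p1 p2 p3 p4 by blast
qed

lemma vt_n: "valid_type n is \<Longrightarrow> n \<in> set is"
  unfolding valid_type_def by auto

lemma double_props:
  assumes vt: "valid_type n is" and d: "double_entry is x"
  shows "2 \<le> x" "prevt is x = x - 2" "x - 2 \<in> insert 0 (set is)" "x - 1 \<notin> insert 0 (set is)" "x \<in> set is"
proof -
  have x: "x \<in> set is" "x - prevt is x = 2" using d unfolding double_entry_def by auto
  show "x \<in> set is" using x(1) .
  show "2 \<le> x" using x(2) by simp
  show p: "prevt is x = x - 2" using x(2) by simp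
  show "x - 2 \<in> insert 0 (set is)" using prevt_props(2)[OF vt x(1)] p by simp
  show "x - 1 \<notin> insert 0 (set is)"
  proof
    assume h: "x - 1 \<in> insert 0 (set is)"
    have "x - 1 \<noteq> 0" using x(2) by simp
    then have "x - 1 \<in> set is" using h by simp
    then have "x - 1 \<le> prevt is x" using prevt_props(3)[OF vt x(1)] x(2) by simp
    then show False using p x(2) by simp
  qed
qed

lemma top_top_single:
  assumes vt: "valid_type n is" and tab: "is_tableau n k is S" and st: "standard_tab S"
    and i: "i \<in> set is" and h: "in_top S (i - 1)"
  shows "\<not> double_entry is i" "prevt is i = i - 1"
proof -
  show nd: "\<not> double_entry is i"
  proof
    assume d: "double_entry is i"
    have "i - 1 \<in> insert 0 (set is)" using h tab_in_is[OF tab] unfolding in_top_def by blast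
    then show False using double_props(4)[OF vt d] by simp
  qed
  show "prevt is i = i - 1" using tab_single[OF vt tab st i nd] .
qed

lemma gap:
  assumes vt: "valid_type n is" and tab: "is_tableau n k is S" and st: "standard_tab S"
    and j: "j \<in> {1..n}" "j \<notin> set is"
  shows "Suc j \<in> set is" "double_entry is (Suc j)"
proof -
  have nin: "n \<in> set is" using vt_n[OF vt] .
  have jn: "j < n" using j nin by (cases "j = n") auto
  define y where "y = (LEAST y. y \<in> set is \<and> j < y)"
  have ex: "n \<in> set is \<and> j < n" using nin jn by simp
  have y: "y \<in> set is" "j < y" using LeastI[of "\<lambda>y. y \<in> set is \<and> j < y", OF ex] unfolding y_def by auto
  have ymin: "\<And>z. z \<in> set is \<Longrightarrow> j < z \<Longrightarrow> y \<le> z" unfolding y_def by (rule Least_le) simp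
  have py: "prevt is y < y" "prevt is y \<in> insert 0 (set is)" using prevt_props[OF vt y(1)] by auto
  have "prevt is y < j"
  proof (cases "prevt is y = 0")
    case True then show ?thesis using j by simp
  next
    case False
    then have pin: "prevt is y \<in> set is" using py by simp
    then have "prevt is y \<noteq> j" using j by auto
    moreover have "\<not> j < prevt is y"
    proof
      assume "j < prevt is y"
      then have "y \<le> prevt is y" using ymin[OF pin] by simp
      with py(1) show False by simp
    qed
    ultimately show ?thesis by simp
  qed
  moreover have "y - prevt is y \<le> 2" using tab_count[OF vt tab st y(1)] by auto
  ultimately have yj: "y = Suc j" "y - prevt is y = 2" using y(2) by auto
  show "Suc j \<in> set is" using y(1) yj by simp
  show "double_entry is (Suc j)" unfolding double_entry_def using y(1) yj by simp
qed



interpretation V: vector_space cscale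
  by unfold_locales (auto simp: cscale_def algebra_simps fun_eq_iff)

lemma cscale_apply[simp]: "cscale c v i = c * v i" by (simp add: cscale_def)

lemma sdim_V: "sdim W = V.dim W" unfolding sdim_def ..

lemma is_subspace_V: "is_subspace n W \<longleftrightarrow> W \<subseteq> Vsp n \<and> V.subspace W"
  unfolding is_subspace_def ..

definition delta :: "nat \<Rightarrow> vec" where "delta j = (\<lambda>i. if i = j then 1 else 0)"

lemma Vsp_span: "Vsp n \<subseteq> V.span (delta ` {..<n})"
proof
  fix v assume v: "v \<in> Vsp n"
  have "v = (\<Sum>j<n. cscale (v j) (delta j))"
  proof
    fix i
    have "(\<Sum>j<n. cscale (v j) (delta j)) i = (\<Sum>j<n. v j * delta j i)"
      by (induction n) auto
    also have "\<dots> = v i" using v unfolding Vsp_def delta_def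
      by (cases "i < n") (auto simp: if_distrib cong: if_cong)
    finally show "v i = (\<Sum>j<n. cscale (v j) (delta j)) i" by simp
  qed
  also have "\<dots> \<in> V.span (delta ` {..<n})"
    by (intro V.span_sum V.span_scale V.span_base) auto
  finally show "v \<in> V.span (delta ` {..<n})" .
qed

lemma Vsp_subspace: "V.subspace (Vsp n)"
  unfolding V.subspace_def Vsp_def by auto

lemma fin_basis:
  assumes "W \<subseteq> Vsp n"
  obtains BW where "BW \<subseteq> W" "V.independent BW" "W \<subseteq> V.span BW" "card BW = V.dim W" "finite BW"
proof -
  obtain BW where b: "BW \<subseteq> W" "V.independent BW" "W \<subseteq> V.span BW" "card BW = V.dim W"
    using V.basis_exists by blast
  have "BW \<subseteq> V.span (delta ` {..<n})" using b(1) assms Vsp_span by blast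
  then have "finite BW" using V.independent_span_bound[of "delta ` {..<n}" BW] b(2) by auto
  then show ?thesis using b that by blast
qed

lemma dim_eq_subspace:
  assumes U: "V.subspace U" and UW: "U \<subseteq> W" and W: "W \<subseteq> Vsp n" and d: "V.dim W \<le> V.dim U"
  shows "U = W"
proof (rule ccontr)
  assume "U \<noteq> W"
  then obtain w where w: "w \<in> W" "w \<notin> U" using UW by blast
  obtain BU where bu: "BU \<subseteq> U" "V.independent BU" "U \<subseteq> V.span BU" "card BU = V.dim U" "finite BU"
    using fin_basis[of U n] UW W by blast
  obtain BW where bw: "BW \<subseteq> W" "V.independent BW" "W \<subseteq> V.span BW" "card BW = V.dim W" "finite BW"
    using fin_basis[OF W] by blast
  have "V.span BU = U" using bu U using V.span_minimal[OF bu(1) U] bu(3) by blast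
  then have wn: "w \<notin> V.span BU" using w by simp
  have ind: "V.independent (insert w BU)" using V.independent_insertI[OF wn bu(2)] .
  have "insert w BU \<subseteq> V.span BW" using bu(1) UW w(1) bw(3) by blast
  then have "card (insert w BU) \<le> card BW" using V.independent_span_bound[OF bw(5) ind] by auto
  moreover have "card (insert w BU) = card BU + 1" using bu(5) wn V.span_superset[of BU] by (subst card_insert_disjoint) auto
  ultimately show False using bu(4) bw(4) d by simp
qed

lemma dim_insert_fin:
  assumes A: "A \<subseteq> Vsp n" and x: "x \<notin> V.span A"
  shows "V.dim (V.span (insert x A)) = V.dim A + 1"
proof -
  obtain BA where ba: "BA \<subseteq> A" "V.independent BA" "A \<subseteq> V.span BA" "card BA = V.dim A" "finite BA"
    using fin_basis[OF A] by blast
  have sp: "V.span BA = V.span A" using V.span_mono[OF ba(1)] V.span_minimal[OF ba(3) V.subspace_span] by blast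
  have xn: "x \<notin> V.span BA" using x sp by simp
  have ind: "V.independent (insert x BA)" using V.independent_insertI[OF xn ba(2)] .
  have "V.span (insert x BA) = V.span (insert x A)"
    by (simp only: V.span_insert sp)
  then have "V.dim (V.span (insert x A)) = card (insert x BA)"
    using V.dim_eq_card[of "insert x BA" "V.span (insert x A)"] ind by (simp add: V.span_span)
  also have "\<dots> = V.dim A + 1" using ba(4,5) xn V.span_superset[of BA] by (subst card_insert_disjoint) auto
  finally show ?thesis .
qed

section \<open>The operator N\<close>

lemma Nop_add: "Nop n k (x + y) = Nop n k x + Nop n k y"
  unfolding Nop_def by (auto simp: fun_eq_iff)
lemma Nop_scale: "Nop n k (cscale c x) = cscale c (Nop n k x)"
  unfolding Nop_def by (auto simp: fun_eq_iff)

lemma Nop_hom: "module_hom cscale cscale (Nop n k)"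
  unfolding module_hom_iff using Nop_add Nop_scale V.module_axioms by blast

lemma Npow_hom: "module_hom cscale cscale (Nop n k ^^ d)"
proof (induction d)
  case 0 then show ?case unfolding module_hom_iff using V.module_axioms by simp
next
  case (Suc d) then show ?case unfolding module_hom_iff using V.module_axioms Nop_add Nop_scale by simp
qed

lemmas Npow_add = module_hom.add[OF Npow_hom]
lemmas Npow_scale = module_hom.scale[OF Npow_hom]
lemmas Npow_diff = module_hom.diff[OF Npow_hom]
lemmas Npow_zero = module_hom.zero[OF Npow_hom]

lemma Nop_Vsp: "Nop n k v \<in> Vsp n"
  unfolding Nop_def Vsp_def by auto

lemma Npow_Vsp: "v \<in> Vsp n \<Longrightarrow> (Nop n k ^^ d) v \<in> Vsp n"
  by (induction d) (auto simp: Nop_Vsp)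

lemma Npow_vanish: "v \<in> Vsp n \<Longrightarrow> n \<le> j + d \<Longrightarrow> (Nop n k ^^ d) v j = 0"
proof (induction d arbitrary: j)
  case 0 then show ?case unfolding Vsp_def by auto
next
  case (Suc d)
  have "(Nop n k ^^ Suc d) v j = Nop n k ((Nop n k ^^ d) v) j" by simp
  also have "\<dots> = 0" using Suc.IH[of "j+1"] Suc.prems unfolding Nop_def by auto
  finally show ?case .
qed

lemma Npow_big: "v \<in> Vsp n \<Longrightarrow> n \<le> d \<Longrightarrow> (Nop n k ^^ d) v = 0"
  using Npow_vanish[of v n _ d k] by (auto simp: fun_eq_iff)

lemma Npre_Suc: "Npre n k 1 (Npre n k d U) = Npre n k (Suc d) U"
  unfolding Npre_def by (auto simp: Nop_Vsp funpow_Suc_right simp del: funpow.simps)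

lemma Npre_mono: "U \<subseteq> W \<Longrightarrow> Npre n k d U \<subseteq> Npre n k d W"
  unfolding Npre_def by auto

lemma Npre_subspace: "V.subspace U \<Longrightarrow> V.subspace (Npre n k d U)"
  unfolding Npre_def V.subspace_def using Vsp_subspace[of n]
  by (auto simp: Npow_add Npow_scale Npow_zero V.subspace_def)

lemma Nim_subspace: "V.subspace (Nim n k d)"
  unfolding Nim_def using module_hom.subspace_image[OF Npow_hom Vsp_subspace] .

lemma Npre_Vsp: "Npre n k d U \<subseteq> Vsp n" unfolding Npre_def by auto

lemma Nim_Vsp: "Nim n k d \<subseteq> Vsp n" unfolding Nim_def using Npow_Vsp by auto

definition Sft :: "nat \<Rightarrow> nat \<Rightarrow> vec \<Rightarrow> vec" where
  "Sft n k w = (\<lambda>j. if j = 0 \<or> j = n - k \<or> n \<le> j then 0 else w (j - 1))"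

lemma Sft_hom: "module_hom cscale cscale (Sft n k)"
  unfolding module_hom_iff using V.module_axioms by (auto simp: Sft_def fun_eq_iff)

lemma Sft_decomp:
  assumes v: "v \<in> Vsp n" and m: "0 < n - k"
  shows "v = Sft n k (Nop n k v) + cscale (v 0) (delta 0) + cscale (v (n - k)) (delta (n - k))"
proof
  fix j
  show "v j = (Sft n k (Nop n k v) + cscale (v 0) (delta 0) + cscale (v (n - k)) (delta (n - k))) j"
  proof (cases "n \<le> j")
    case True
    then show ?thesis using v m unfolding Vsp_def Sft_def delta_def by auto
  next
    case False
    then show ?thesis using m unfolding Sft_def delta_def Nop_def
      by (cases "j = 0"; cases "j = n - k") auto
  qed
qed

lemma dim_Npre1:
  assumes A: "A \<subseteq> Vsp n" and m: "0 < n - k"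
  shows "V.dim (Npre n k 1 A) \<le> V.dim A + 2"
proof -
  obtain BA where ba: "BA \<subseteq> A" "V.independent BA" "A \<subseteq> V.span BA" "card BA = V.dim A" "finite BA"
    using fin_basis[OF A] by blast
  let ?T = "Sft n k ` BA \<union> {delta 0, delta (n - k)}"
  have "Npre n k 1 A \<subseteq> V.span ?T"
  proof
    fix v assume "v \<in> Npre n k 1 A"
    then have v: "v \<in> Vsp n" "Nop n k v \<in> A" unfolding Npre_def by auto
    have "Sft n k (Nop n k v) \<in> Sft n k ` V.span BA" using v(2) ba(3) by blast
    also have "\<dots> = V.span (Sft n k ` BA)" using module_hom.span_image[OF Sft_hom] by simp
    also have "\<dots> \<subseteq> V.span ?T" by (rule V.span_mono) auto
    finally have s: "Sft n k (Nop n k v) \<in> V.span ?T" .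
    have "cscale (v 0) (delta 0) \<in> V.span ?T" "cscale (v (n - k)) (delta (n - k)) \<in> V.span ?T"
      by (intro V.span_scale V.span_base; simp)+
    with s have "Sft n k (Nop n k v) + cscale (v 0) (delta 0) + cscale (v (n - k)) (delta (n - k)) \<in> V.span ?T"
      by (intro V.span_add) auto
    then show "v \<in> V.span ?T" using Sft_decomp[OF v(1) m] by simp
  qed
  then have "V.dim (Npre n k 1 A) \<le> card ?T" using V.dim_le_card ba(5) by blast
  also have "\<dots> \<le> card (Sft n k ` BA) + card {delta 0, delta (n - k)}" by (rule card_Un_le)
  also have "\<dots> \<le> card BA + 2" using card_image_le[OF ba(5), of "Sft n k"]
    by (simp add: card_insert_if)
  finally show ?thesis using ba(4) by simp
qed

section \<open>Core genericity lemma\<close>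

lemma sub_span: "V.subspace A \<Longrightarrow> V.span A = A"
  by (simp add: V.span_eq_iff)

lemma finite_subsing: "(\<And>a b. a \<in> S \<Longrightarrow> b \<in> S \<Longrightarrow> a = b) \<Longrightarrow> finite S"
proof (cases "S = {}")
  case False
  then obtain a where "a \<in> S" by blast
  moreover assume "\<And>a b. a \<in> S \<Longrightarrow> b \<in> S \<Longrightarrow> a = b"
  ultimately have "S \<subseteq> {a}" by blast
  then show ?thesis using finite_subset by blast
qed simp

lemma two_dim_setup:
  assumes A: "V.subspace A" "A \<subseteq> Vsp n"
    and B: "V.subspace B" "A \<subseteq> B" "B \<subseteq> Vsp n" "V.dim B = V.dim A + 2"
  obtains u w where "u \<in> B" "w \<in> B"
    "\<And>b. b \<in> B \<Longrightarrow> \<exists>a\<in>A. \<exists>\<alpha> \<beta>. b = a + cscale \<alpha> u + cscale \<beta> w"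
    "\<And>\<alpha> \<beta>. cscale \<alpha> u + cscale \<beta> w \<in> A \<Longrightarrow> \<alpha> = 0 \<and> \<beta> = 0"
proof -
  obtain u where u: "u \<in> B" "u \<notin> A"
  proof (cases "B \<subseteq> A")
    case True then have "A = B" using B by blast
    then show ?thesis using B(4) by simp
  qed blast
  let ?A1 = "V.span (insert u A)"
  have uA: "u \<notin> V.span A" by (subst sub_span[OF A(1)]) (use u in simp)
  have dA1: "V.dim ?A1 = V.dim A + 1" using dim_insert_fin[OF A(2) uA] .
  have A1B: "?A1 \<subseteq> B" using V.span_minimal[of "insert u A" B] u B by blast
  have A1V: "?A1 \<subseteq> Vsp n" using A1B B by blast
  obtain w where w: "w \<in> B" "w \<notin> ?A1"
  proof (cases "B \<subseteq> ?A1")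
    case True then have "?A1 = B" using A1B by blast
    then show ?thesis using B(4) dA1 by simp
  qed blast
  let ?A2 = "V.span (insert w ?A1)"
  have wA1: "w \<notin> V.span ?A1" using w by (simp add: V.span_span)
  have dA2: "V.dim ?A2 = V.dim A + 2" using dim_insert_fin[OF A1V wA1] dA1 by simp
  have A2B: "?A2 \<subseteq> B" using V.span_minimal[of "insert w ?A1" B] w A1B B by blast
  have A2eq: "?A2 = B" using dim_eq_subspace[OF V.subspace_span A2B B(3)] dA2 B(4) by simp
  have co: "\<exists>a\<in>A. \<exists>\<alpha> \<beta>. b = a + cscale \<alpha> u + cscale \<beta> w" if b: "b \<in> B" for b
  proof -
    from b A2eq have "b \<in> ?A2" by simp
    then obtain \<beta> where "b - cscale \<beta> w \<in> ?A1" using V.span_breakdown_eq by (auto simp: V.span_span)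
    then obtain \<alpha> where "b - cscale \<beta> w - cscale \<alpha> u \<in> V.span A" using V.span_breakdown_eq by blast
    then have "b - cscale \<beta> w - cscale \<alpha> u \<in> A" by (subst (asm) sub_span[OF A(1)])
    moreover have "b = (b - cscale \<beta> w - cscale \<alpha> u) + cscale \<alpha> u + cscale \<beta> w" by simp
    ultimately show ?thesis by blast
  qed
  have ind: "\<alpha> = 0 \<and> \<beta> = 0" if h: "cscale \<alpha> u + cscale \<beta> w \<in> A" for \<alpha> \<beta>
  proof (rule ccontr)
    assume ne: "\<not> (\<alpha> = 0 \<and> \<beta> = 0)"
    show False
    proof (cases "\<beta> = 0")
      case True
      then have "\<alpha> \<noteq> 0" using ne by simp
      have "cscale \<beta> w = 0" using True by (simp add: cscale_def fun_eq_iff)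
      then have "cscale \<alpha> u \<in> A" using h by (metis add.right_neutral)
      then have "cscale (inverse \<alpha>) (cscale \<alpha> u) \<in> A" using A(1) V.subspace_scale by blast
      moreover have "cscale (inverse \<alpha>) (cscale \<alpha> u) = u" using \<open>\<alpha> \<noteq> 0\<close> by (simp add: cscale_def fun_eq_iff)
      ultimately show False using u by simp
    next
      case False
      have "cscale \<alpha> u + cscale \<beta> w \<in> ?A1" using h V.span_superset by blast
      moreover have "cscale (-\<alpha>) u \<in> ?A1" by (intro V.span_scale V.span_base) simp
      ultimately have "cscale \<alpha> u + cscale \<beta> w + cscale (-\<alpha>) u \<in> ?A1" by (rule V.span_add)
      moreover have "cscale \<alpha> u + cscale \<beta> w + cscale (-\<alpha>) u = cscale \<beta> w"
        by (rule ext) (simp add: plus_fun_def)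
      ultimately have "cscale \<beta> w \<in> ?A1" by simp
      then have "cscale (inverse \<beta>) (cscale \<beta> w) \<in> ?A1" by (rule V.span_scale)
      moreover have "cscale (inverse \<beta>) (cscale \<beta> w) = w" using False by (simp add: cscale_def fun_eq_iff)
      ultimately show False using w by simp
    qed
  qed
  show ?thesis using that u(1) w(1) co ind by blast
qed

lemma core:
  assumes A: "V.subspace A" "A \<subseteq> Vsp n"
    and B: "V.subspace B" "A \<subseteq> B" "B = Npre n k 1 A" "V.dim B = V.dim A + 2"
    and I: "finite I"
    and H: "\<And>i. i \<in> I \<Longrightarrow> V.subspace (H' i) \<and> H i \<subseteq> H' i \<and> H i \<noteq> H' i \<and> H' i \<subseteq> Npre n k 1 (H i)"
  shows "\<exists>X. V.subspace X \<and> A \<subseteq> X \<and> X \<subseteq> B \<and> V.dim X = V.dim A + 1 \<and>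
     (\<forall>i\<in>I. \<forall>d. H i = Npre n k d X \<longrightarrow> H' i = Npre n k (Suc d) A)"
proof -
  have BV: "B \<subseteq> Vsp n" using B(3) Npre_Vsp by blast
  obtain u w where uw: "u \<in> B" "w \<in> B"
    and co: "\<And>b. b \<in> B \<Longrightarrow> \<exists>a\<in>A. \<exists>\<alpha> \<beta>. b = a + cscale \<alpha> u + cscale \<beta> w"
    and ind: "\<And>\<alpha> \<beta>. cscale \<alpha> u + cscale \<beta> w \<in> A \<Longrightarrow> \<alpha> = 0 \<and> \<beta> = 0"
    using two_dim_setup[OF A B(1,2) BV B(4)] by blast
  define X where "X c = V.span (insert (u + cscale c w) A)" for c
  have Xsub: "V.subspace (X c)" for c unfolding X_def by simp
  have AX: "A \<subseteq> X c" for c unfolding X_def using V.span_superset by blast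
  have ucB: "u + cscale c w \<in> B" for c
    using V.subspace_add[OF B(1) uw(1) V.subspace_scale[OF B(1) uw(2)]] .
  have XB: "X c \<subseteq> B" for c unfolding X_def
    by (rule V.span_minimal[OF _ B(1)]) (use ucB B(2) in auto)
  have notA: "u + cscale c w \<notin> A" for c
  proof
    assume h: "u + cscale c w \<in> A"
    have e: "cscale 1 u = u" by (simp add: cscale_def)
    have "cscale 1 u + cscale c w \<in> A" unfolding e by (rule h)
    then have "(1::complex) = 0 \<and> c = 0" by (rule ind)
    then show False by simp
  qed
  have dimX: "V.dim (X c) = V.dim A + 1" for c
    unfolding X_def by (rule dim_insert_fin[OF A(2)]) (subst sub_span[OF A(1)], rule notA)
  have Xmem: "\<exists>a\<in>A. \<exists>t. v = a + cscale t (u + cscale c w)" if "v \<in> X c" for v c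
  proof -
    from that obtain t where "v - cscale t (u + cscale c w) \<in> V.span A"
      unfolding X_def using V.span_breakdown_eq by blast
    then have "v - cscale t (u + cscale c w) \<in> A" by (subst (asm) sub_span[OF A(1)])
    moreover have "v = (v - cscale t (u + cscale c w)) + cscale t (u + cscale c w)" by simp
    ultimately show ?thesis by blast
  qed
  have Xinj: "c1 = c2" if "X c1 = X c2" for c1 c2
  proof -
    have "u + cscale c1 w \<in> X c2" using that unfolding X_def by (auto intro: V.span_base)
    then obtain a t where a: "a \<in> A" "u + cscale c1 w = a + cscale t (u + cscale c2 w)"
      using Xmem by blast
    have "cscale (1 - t) u + cscale (c1 - t * c2) w = a"
    proof
      fix j
      have "u j + c1 * w j = a j + t * (u j + c2 * w j)" using fun_cong[OF a(2), of j]
        by (simp add: plus_fun_def)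
      then show "(cscale (1 - t) u + cscale (c1 - t * c2) w) j = a j"
        by (simp add: plus_fun_def algebra_simps)
    qed
    then have "1 - t = 0 \<and> c1 - t * c2 = 0" using ind a(1) by metis
    then show ?thesis by simp
  qed
  define Bd where "Bd d = {v \<in> B. \<exists>a\<in>A. v - a \<in> Nim n k d}" for d
  have Bdsub: "V.subspace (Bd d)" for d
    unfolding V.subspace_def
  proof (intro conjI ballI allI)
    show "0 \<in> Bd d" unfolding Bd_def using B(1) A(1) Nim_subspace[of n k d]
      by (auto simp: V.subspace_0 intro!: bexI[of _ 0])
  next
    fix x y assume "x \<in> Bd d" "y \<in> Bd d"
    then obtain a b where ab: "x \<in> B" "y \<in> B" "a \<in> A" "b \<in> A" "x - a \<in> Nim n k d" "y - b \<in> Nim n k d"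
      unfolding Bd_def by blast
    have "(x - a) + (y - b) \<in> Nim n k d" using ab Nim_subspace V.subspace_add by blast
    moreover have "(x - a) + (y - b) = (x + y) - (a + b)" by simp
    ultimately show "x + y \<in> Bd d" unfolding Bd_def using ab B(1) A(1) V.subspace_add by fastforce
  next
    fix c x assume "x \<in> Bd d"
    then obtain a where ab: "x \<in> B" "a \<in> A" "x - a \<in> Nim n k d"
      unfolding Bd_def by blast
    have "cscale c (x - a) \<in> Nim n k d" using ab Nim_subspace V.subspace_scale by blast
    moreover have "cscale c (x - a) = cscale c x - cscale c a" by (rule ext) (simp add: algebra_simps)
    ultimately show "cscale c x \<in> Bd d" unfolding Bd_def using ab B(1) A(1) V.subspace_scale by fastforce
  qed
  have ABd: "A \<subseteq> Bd d" for d
  proof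
    fix x assume x: "x \<in> A"
    have "x - x \<in> Nim n k d" using V.subspace_0[OF Nim_subspace[of n k d]] by simp
    then show "x \<in> Bd d" unfolding Bd_def using x B(2) by blast
  qed
  have BdB: "Bd d \<subseteq> B" for d unfolding Bd_def by blast
  have BinBd: "B \<subseteq> Bd d" if "u \<in> Bd d" "w \<in> Bd d" for d
  proof
    fix b assume "b \<in> B"
    then obtain a \<alpha> \<beta> where "a \<in> A" "b = a + cscale \<alpha> u + cscale \<beta> w" using co by blast
    moreover have "a \<in> Bd d" using \<open>a \<in> A\<close> ABd by blast
    moreover have "cscale \<alpha> u \<in> Bd d" using V.subspace_scale[OF Bdsub that(1)] .
    moreover have "cscale \<beta> w \<in> Bd d" using V.subspace_scale[OF Bdsub that(2)] .
    ultimately show "b \<in> Bd d" using V.subspace_add[OF Bdsub] by simp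
  qed
  define Bad1 where "Bad1 d = (if B \<subseteq> Bd d then {} else {c. u + cscale c w \<in> Bd d})" for d
  define Bad2 where "Bad2 i d = (if B \<subseteq> Bd d then {c. H i = Npre n k d (X c)} else {})" for i d
  have fin1: "finite (Bad1 d)" for d
  proof (rule finite_subsing)
    fix c1 c2 assume c: "c1 \<in> Bad1 d" "c2 \<in> Bad1 d"
    show "c1 = c2"
    proof (rule ccontr)
      assume ne: "c1 \<noteq> c2"
      have nb: "\<not> B \<subseteq> Bd d" and m: "u + cscale c1 w \<in> Bd d" "u + cscale c2 w \<in> Bd d"
        using c unfolding Bad1_def by (auto split: if_splits)
      have "cscale (inverse (c1 - c2)) ((u + cscale c1 w) - (u + cscale c2 w)) \<in> Bd d"
        using m Bdsub V.subspace_diff V.subspace_scale by blast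
      moreover have "cscale (inverse (c1 - c2)) ((u + cscale c1 w) - (u + cscale c2 w)) = w"
      proof
        fix x
        have h: "c1 - c2 \<noteq> 0" using ne by simp
        have e: "u x + c1 * w x - (u x + c2 * w x) = (c1 - c2) * w x" by (simp add: algebra_simps)
        show "cscale (inverse (c1 - c2)) ((u + cscale c1 w) - (u + cscale c2 w)) x = w x"
          using h by (simp add: left_diff_distrib[symmetric] mult.assoc[symmetric])
      qed
      ultimately have wB: "w \<in> Bd d" by simp
      have "(u + cscale c1 w) - cscale c1 w \<in> Bd d"
        using m wB Bdsub V.subspace_diff V.subspace_scale by blast
      then have "u \<in> Bd d" by simp
      then show False using BinBd wB nb by blast
    qed
  qed
  have fin2: "finite (Bad2 i d)" for i d
  proof (rule finite_subsing)
    fix c1 c2 assume c: "c1 \<in> Bad2 i d" "c2 \<in> Bad2 i d"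
    have bb: "B \<subseteq> Bd d" and e: "Npre n k d (X c1) = Npre n k d (X c2)"
      using c unfolding Bad2_def by (auto split: if_splits)
    have incl: "X c \<subseteq> X c'" if e': "Npre n k d (X c) = Npre n k d (X c')" for c c'
    proof
      fix v assume v: "v \<in> X c"
      then have "v \<in> Bd d" using XB bb by blast
      then obtain a where a: "a \<in> A" "v - a \<in> Nim n k d" unfolding Bd_def by blast
      then obtain z where z: "z \<in> Vsp n" "v - a = (Nop n k ^^ d) z" unfolding Nim_def by blast
      have "v - a \<in> X c" using v a(1) AX Xsub V.subspace_diff by blast
      then have "z \<in> Npre n k d (X c)" using z unfolding Npre_def by simp
      then have "z \<in> Npre n k d (X c')" using e' by simp
      then have "v - a \<in> X c'" using z unfolding Npre_def by simp
      then have "(v - a) + a \<in> X c'" using a(1) AX Xsub V.subspace_add by blast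
      then show "v \<in> X c'" by simp
    qed
    show "c1 = c2" using incl[OF e] incl[OF e[symmetric]] Xinj by blast
  qed
  let ?Bad = "(\<Union>d<n. Bad1 d) \<union> (\<Union>i\<in>I. \<Union>d<n. Bad2 i d)"
  have "finite ?Bad" using fin1 fin2 I by auto
  then obtain c where c: "c \<notin> ?Bad" using ex_new_if_finite[OF infinite_UNIV_char_0] by blast
  have main: "H' i = Npre n k (Suc d) A" if i: "i \<in> I" and hd: "H i = Npre n k d (X c)" for i d
  proof -
    have Hp: "V.subspace (H' i)" "H i \<subseteq> H' i" "H i \<noteq> H' i" "H' i \<subseteq> Npre n k 1 (H i)"
      using H[OF i] by auto
    show ?thesis
    proof (cases "n \<le> d")
      case True
      have "Npre n k d (X c) = Vsp n" unfolding Npre_def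
        using Npow_big[OF _ True] Xsub V.subspace_0 by auto
      then have "H i = Vsp n" using hd by simp
      moreover have "H' i \<subseteq> Vsp n" using Hp(4) Npre_Vsp by blast
      ultimately show ?thesis using Hp(2,3) by blast
    next
      case False
      then have dn: "d < n" by simp
      show ?thesis
      proof (cases "B \<subseteq> Bd d")
        case True
        then have "c \<in> Bad2 i d" unfolding Bad2_def using hd by simp
        then show ?thesis using c i dn by blast
      next
        case nb: False
        have cn: "u + cscale c w \<notin> Bd d" using c dn nb unfolding Bad1_def by auto
        have HA: "H i = Npre n k d A"
        proof
          show "Npre n k d A \<subseteq> H i" using hd Npre_mono[OF AX] by simp
          show "H i \<subseteq> Npre n k d A"
          proof
            fix v assume "v \<in> H i"
            then have v: "v \<in> Vsp n" "(Nop n k ^^ d) v \<in> X c" using hd unfolding Npre_def by auto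
            let ?y = "(Nop n k ^^ d) v"
            obtain a t where at: "a \<in> A" "?y = a + cscale t (u + cscale c w)" using Xmem v(2) by blast
            have yN: "?y \<in> Nim n k d" unfolding Nim_def using v(1) by blast
            have "t = 0"
            proof (rule ccontr)
              assume t: "t \<noteq> 0"
              have a'A: "cscale (- inverse t) a \<in> A" using at(1) A(1) V.subspace_scale by blast
              have eq: "(u + cscale c w) - cscale (- inverse t) a = cscale (inverse t) ?y"
              proof
                fix j
                have "?y j = a j + t * (u j + c * w j)" using fun_cong[OF at(2), of j] by (simp add: plus_fun_def)
                then show "((u + cscale c w) - cscale (- inverse t) a) j = cscale (inverse t) ?y j"
                  using t by (simp add: plus_fun_def field_simps)
              qed
              have nim: "cscale (inverse t) ?y \<in> Nim n k d" using yN Nim_subspace V.subspace_scale by blast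
              have "(u + cscale c w) - cscale (- inverse t) a \<in> Nim n k d" by (subst eq) (rule nim)
              then have "u + cscale c w \<in> Bd d" unfolding Bd_def using ucB[of c] a'A by (intro CollectI conjI bexI)
              then show False using cn by simp
            qed
            then have "?y = a" using at(2) by simp
            then show "v \<in> Npre n k d A" using v(1) at(1) unfolding Npre_def by simp
          qed
        qed
        show ?thesis
        proof
          have HS: "Npre n k 1 (H i) = Npre n k (Suc d) A" unfolding HA by (rule Npre_Suc)
          show "H' i \<subseteq> Npre n k (Suc d) A" using Hp(4) unfolding HS .
          show "Npre n k (Suc d) A \<subseteq> H' i"
          proof
            fix v assume vA: "v \<in> Npre n k (Suc d) A"
            obtain z where z: "z \<in> H' i" "z \<notin> H i" using Hp(2,3) by blast
            have zA: "z \<in> Npre n k (Suc d) A" using z(1) Hp(4) HS by blast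
            have zV: "z \<in> Vsp n" using zA Npre_Vsp by blast
            let ?yz = "(Nop n k ^^ d) z"
            let ?y = "(Nop n k ^^ d) v"
            have inB: "(Nop n k ^^ d) x \<in> B" "(Nop n k ^^ d) x \<in> Nim n k d"
              if "x \<in> Npre n k (Suc d) A" for x
            proof -
              from that have x: "x \<in> Vsp n" "Nop n k ((Nop n k ^^ d) x) \<in> A" unfolding Npre_def by auto
              show "(Nop n k ^^ d) x \<in> B" using B(3) x Npow_Vsp unfolding Npre_def by simp
              show "(Nop n k ^^ d) x \<in> Nim n k d" unfolding Nim_def using x(1) by blast
            qed
            have yzA: "?yz \<notin> A"
            proof
              assume "?yz \<in> A"
              then have "z \<in> Npre n k d A" using zV unfolding Npre_def by simp
              then show False using z(2) HA by simp
            qed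
            have yzBd: "?yz \<in> Bd d" unfolding Bd_def using inB[OF zA] V.subspace_0[OF A(1)]
              by (intro CollectI conjI bexI[of _ 0]) simp_all
            have yBd: "?y \<in> Bd d" unfolding Bd_def using inB[OF vA] V.subspace_0[OF A(1)]
              by (intro CollectI conjI bexI[of _ 0]) simp_all
            have ysp: "?y \<in> V.span (insert ?yz A)"
            proof (rule ccontr)
              assume yn: "?y \<notin> V.span (insert ?yz A)"
              let ?A1 = "V.span (insert ?yz A)"
              let ?A2 = "V.span (insert ?y ?A1)"
              have d1: "V.dim ?A1 = V.dim A + 1"
                by (rule dim_insert_fin[OF A(2)]) (subst sub_span[OF A(1)], rule yzA)
              have A1Bd: "?A1 \<subseteq> Bd d" using V.span_minimal[of "insert ?yz A" "Bd d"] yzBd ABd Bdsub by blast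
              have A1V: "?A1 \<subseteq> Vsp n" using A1Bd BdB BV by blast
              have d2: "V.dim ?A2 = V.dim A + 2"
                using dim_insert_fin[OF A1V] yn d1 by (simp add: V.span_span)
              have A2Bd: "?A2 \<subseteq> Bd d" using V.span_minimal[of "insert ?y ?A1" "Bd d"] yBd A1Bd Bdsub by blast
              have A2B: "?A2 \<subseteq> B" using A2Bd BdB by blast
              have "V.dim B \<le> V.dim ?A2" using d2 B(4) by simp
              then have "?A2 = B" using dim_eq_subspace[OF V.subspace_span A2B BV] by blast
              then show False using A2Bd nb by blast
            qed
            then obtain t where t: "?y - cscale t ?yz \<in> V.span A" using V.span_breakdown_eq by blast
            then have tA: "?y - cscale t ?yz \<in> A" by (subst (asm) sub_span[OF A(1)])
            have vV: "v \<in> Vsp n" using vA Npre_Vsp by blast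
            have "(Nop n k ^^ d) (v - cscale t z) = ?y - cscale t ?yz" by (simp add: Npow_diff Npow_scale)
            moreover have "v - cscale t z \<in> Vsp n" using vV zV Vsp_subspace V.subspace_diff V.subspace_scale by blast
            ultimately have "v - cscale t z \<in> H i" using tA HA unfolding Npre_def by simp
            then have "v - cscale t z \<in> H' i" using Hp(2) by blast
            moreover have "cscale t z \<in> H' i" using z(1) Hp(1) V.subspace_scale by blast
            ultimately have "(v - cscale t z) + cscale t z \<in> H' i" using Hp(1) V.subspace_add by blast
            then show "v \<in> H' i" by simp
          qed
        qed
      qed
    qed
  qed
  show ?thesis using Xsub AX XB dimX main by blast
qed



lemma dim_zero: "V.dim {0} = 0"
  using V.dim_eq_card[of "{}" "{0::vec}"] V.independent_empty by simp

lemma pflag_0: "pflag n is G \<Longrightarrow> G 0 = {0}"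
  unfolding pflag_def by (elim conjE)
lemma pflag_sub: "pflag n is G \<Longrightarrow> j \<in> set is \<Longrightarrow> is_subspace n (G j) \<and> sdim (G j) = j"
  unfolding pflag_def by (elim conjE) (drule bspec, assumption)
lemma pflag_mono: "pflag n is G \<Longrightarrow> j \<in> set is \<Longrightarrow> G (prevt is j) \<subseteq> G j"
  unfolding pflag_def by (elim conjE) (drule bspec, assumption)
lemma pflag_junk: "pflag n is G \<Longrightarrow> j \<notin> insert 0 (set is) \<Longrightarrow> G j = {}"
  unfolding pflag_def by (elim conjE) (drule spec, erule mp)

lemma zero_sub: "V.subspace {0}" "{0} \<subseteq> Vsp n"
  unfolding V.subspace_def Vsp_def by auto

lemma pflag_facts:
  assumes "pflag n is G" "j \<in> insert 0 (set is)"
  shows "V.subspace (G j)" "G j \<subseteq> Vsp n" "V.dim (G j) = j"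
proof -
  have "V.subspace (G j) \<and> G j \<subseteq> Vsp n \<and> V.dim (G j) = j"
  proof (cases "j = 0")
    case True
    then have "G j = {0}" using pflag_0[OF assms(1)] by simp
    then show ?thesis using dim_zero True zero_sub by simp
  next
    case False
    then have "j \<in> set is" using assms by simp
    then show ?thesis using pflag_sub[OF assms(1)] unfolding is_subspace_V sdim_V by blast
  qed
  then show "V.subspace (G j)" "G j \<subseteq> Vsp n" "V.dim (G j) = j" by auto
qed

lemma RHS_pf: "G \<in> RHS n k is S \<Longrightarrow> pflag n is G"
  unfolding RHS_def mem_Collect_eq by (elim conjE)
lemma RHS_1: "G \<in> RHS n k is S \<Longrightarrow> i \<in> set is \<Longrightarrow> G i \<subseteq> Npre n k 1 (G (prevt is i))"
  unfolding RHS_def mem_Collect_eq by (elim conjE) (drule bspec, assumption)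
lemma RHS_2: "G \<in> RHS n k is S \<Longrightarrow> i \<in> set is \<Longrightarrow> in_top S i \<Longrightarrow> in_bot S (i - 1) \<Longrightarrow>
   \<not> double_entry is (i - 1) \<Longrightarrow> G i = Npre n k 1 (G (i - 2))"
  unfolding RHS_def mem_Collect_eq by (elim conjE) (drule bspec, assumption, blast)
lemma RHS_3a: "G \<in> RHS n k is S \<Longrightarrow> i \<in> set is \<Longrightarrow> in_top S i \<Longrightarrow> in_top S (i - 1) \<Longrightarrow>
   in_bot S r \<Longrightarrow> \<not> double_entry is r \<Longrightarrow> G (i - 1) = Npre n k d (G r) \<Longrightarrow>
   G i = Npre n k (d + 1) (G (r - 1))"
  unfolding RHS_def mem_Collect_eq by (elim conjE) (drule bspec[of _ _ i], assumption, blast)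
lemma RHS_3b: "G \<in> RHS n k is S \<Longrightarrow> i \<in> set is \<Longrightarrow> in_top S i \<Longrightarrow> in_top S (i - 1) \<Longrightarrow>
   j < n - 2 * k \<Longrightarrow> G (i - 1) = Npre n k d (Nim n k (n - k - j)) \<Longrightarrow>
   G i = Npre n k d (Nim n k (n - k - j - 1))"
  unfolding RHS_def mem_Collect_eq by (elim conjE) (drule bspec[of _ _ i], assumption, blast)

lemma double_B:
  assumes vt: "valid_type n is" and m: "0 < n - k" and G: "G \<in> RHS n k is S"
    and d: "double_entry is x"
  shows "G x = Npre n k 1 (G (x - 2))"
proof -
  note D = double_props[OF vt d]
  have pf: "pflag n is G" using RHS_pf[OF G] .
  have Ax: "G (x - 2) \<subseteq> Vsp n" "V.dim (G (x - 2)) = x - 2" using pflag_facts[OF pf D(3)] by auto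
  have Bx: "V.subspace (G x)" "V.dim (G x) = x" using pflag_facts[OF pf, of x] D(5) by auto
  have sub: "G x \<subseteq> Npre n k 1 (G (x - 2))" using RHS_1[OF G D(5)] D(2) by simp
  have "V.dim (Npre n k 1 (G (x - 2))) \<le> V.dim (G x)"
    using dim_Npre1[OF Ax(1) m] Ax(2) Bx(2) D(1) by simp
  then show ?thesis using dim_eq_subspace[OF Bx(1) sub Npre_Vsp] by blast
qed

lemma supset_dir:
  assumes nk: "2 * k \<le> n" and vt: "valid_type n is" and tab: "is_tableau n k is S"
    and st: "standard_tab S" and G: "G \<in> RHS n k is S"
  shows "G \<in> pr is ` Ycomp n k (phi is S)"
proof -
  have isn: "\<And>j. j \<in> set is \<Longrightarrow> j \<in> {1..n}" using vt_props[OF vt] by fastforce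
  have n1: "1 \<le> n" using isn[OF vt_n[OF vt]] by simp
  have m: "0 < n - k" using nk n1 by simp
  have pf: "pflag n is G" using RHS_pf[OF G] .
  define I where "I = {i \<in> set is. in_top S i \<and> in_top S (i - 1)}"
  have Ifin: "finite I" unfolding I_def by simp
  have Iprops: "V.subspace (G i) \<and> G (i - 1) \<subseteq> G i \<and> G (i - 1) \<noteq> G i \<and> G i \<subseteq> Npre n k 1 (G (i - 1))"
    if i: "i \<in> I" for i
  proof -
    have i1: "i \<in> set is" "in_top S (i - 1)" using i unfolding I_def by auto
    have p: "prevt is i = i - 1" using top_top_single[OF vt tab st i1] by simp
    have pi: "i - 1 \<in> insert 0 (set is)" using prevt_props(2)[OF vt i1(1)] p by simp
    have "V.subspace (G i)" "V.dim (G i) = i" using pflag_facts[OF pf, of i] i1 by auto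
    moreover have "V.dim (G (i - 1)) = i - 1" using pflag_facts[OF pf pi] by simp
    moreover have "G (i - 1) \<subseteq> G i" using pflag_mono[OF pf i1(1)] p by simp
    moreover have "G i \<subseteq> Npre n k 1 (G (i - 1))" using RHS_1[OF G i1(1)] p by simp
    moreover have "1 \<le> i" using isn[OF i1(1)] by simp
    ultimately show ?thesis by auto
  qed
  define P where "P x X \<longleftrightarrow> V.subspace X \<and> G (x - 2) \<subseteq> X \<and> X \<subseteq> G x \<and>
      V.dim X = V.dim (G (x - 2)) + 1 \<and>
      (\<forall>i\<in>I. \<forall>d. G (i - 1) = Npre n k d X \<longrightarrow> G i = Npre n k (Suc d) (G (x - 2)))" for x X
  have Pex: "\<exists>X. P x X" if d: "double_entry is x" for x
  proof -
    note D = double_props[OF vt d]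
    have A: "V.subspace (G (x - 2))" "G (x - 2) \<subseteq> Vsp n" "V.dim (G (x - 2)) = x - 2"
      using pflag_facts[OF pf D(3)] by auto
    have B: "V.subspace (G x)" "V.dim (G x) = x" using pflag_facts[OF pf, of x] D(5) by auto
    have AB: "G (x - 2) \<subseteq> G x" using pflag_mono[OF pf D(5)] D(2) by simp
    have BN: "G x = Npre n k 1 (G (x - 2))" using double_B[OF vt m G d] .
    have dB: "V.dim (G x) = V.dim (G (x - 2)) + 2" using A(3) B(2) D(1) by simp
    have "\<exists>X. V.subspace X \<and> G (x - 2) \<subseteq> X \<and> X \<subseteq> G x \<and> V.dim X = V.dim (G (x - 2)) + 1 \<and>
      (\<forall>i\<in>I. \<forall>d. G (i - 1) = Npre n k d X \<longrightarrow> G i = Npre n k (Suc d) (G (x - 2)))"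
      using core[OF A(1,2) B(1) AB BN dB Ifin, of G "\<lambda>i. G (i - 1)"] Iprops by simp
    then show ?thesis unfolding P_def .
  qed
  define Xf where "Xf x = (SOME X. P x X)" for x
  have XP: "P x (Xf x)" if "double_entry is x" for x
    unfolding Xf_def using someI_ex[OF Pex[OF that]] .
  define F where "F j = (if j \<in> insert 0 (set is) then G j else if j \<le> n then Xf (Suc j) else {})" for j
  have Fa: "F j = G j" if "j \<in> insert 0 (set is)" for j using that unfolding F_def by simp
  have Fb: "F j = Xf (Suc j) \<and> double_entry is (Suc j) \<and> Suc j \<in> set is"
    if j: "j \<in> {1..n}" "j \<notin> set is" for j
    using j gap[OF vt tab st j] unfolding F_def by auto
  have Fc: "F j = {}" if nj: "n < j" for j
  proof -
    have "j \<notin> set is" using isn nj by fastforce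
    moreover have "j \<noteq> 0" using nj by simp
    ultimately show ?thesis using nj unfolding F_def by simp
  qed
  have Fdbl: "F (x - 1) = Xf x" if d: "double_entry is x" for x
  proof -
    note D = double_props[OF vt d]
    have "x \<le> n" using isn[OF D(5)] by simp
    then have "x - 1 \<le> n" "Suc (x - 1) = x" using D(1) by auto
    then show ?thesis using D(4) unfolding F_def by simp
  qed
  have Xs: "V.subspace (Xf x)" "G (x - 2) \<subseteq> Xf x" "Xf x \<subseteq> G x" "V.dim (Xf x) = V.dim (G (x - 2)) + 1"
    if d: "double_entry is x" for x
    using XP[OF d] unfolding P_def by auto
  have Xgen: "G i = Npre n k (Suc dd) (G (x - 2))"
    if d: "double_entry is x" and i: "i \<in> I" and e: "G (i - 1) = Npre n k dd (Xf x)" for x i dd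
  proof -
    have "\<forall>i\<in>I. \<forall>d. G (i - 1) = Npre n k d (Xf x) \<longrightarrow> G i = Npre n k (Suc d) (G (x - 2))"
      using XP[OF d] unfolding P_def by (elim conjE)
    then show ?thesis using i e by blast
  qed
  have Fung1: "F i \<subseteq> Npre n k 1 (F (i - 1))" if i: "i \<in> {1..n}" for i
  proof (cases "i \<in> set is")
    case True
    then have Fi: "F i = G i" using Fa by simp
    show ?thesis
    proof (cases "double_entry is i")
      case False
      have p: "prevt is i = i - 1" using tab_single[OF vt tab st True False] .
      then have "i - 1 \<in> insert 0 (set is)" using prevt_props(2)[OF vt True] by simp
      then show ?thesis using Fi Fa RHS_1[OF G True] p by simp
    next
      case d: True
      note D = double_props[OF vt d]
      have "G i \<subseteq> Npre n k 1 (G (i - 2))" using RHS_1[OF G D(5)] D(2) by simp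
      also have "\<dots> \<subseteq> Npre n k 1 (Xf i)" using Npre_mono[OF Xs(2)[OF d]] .
      finally show ?thesis using Fi Fdbl[OF d] by simp
    qed
  next
    case False
    have fb: "F i = Xf (Suc i)" "double_entry is (Suc i)" "Suc i \<in> set is" using Fb[OF i False] by auto
    note D = double_props[OF vt fb(2)]
    have "i - 1 \<in> insert 0 (set is)" using D(3) by simp
    then have Fi1: "F (i - 1) = G (i - 1)" using Fa by simp
    have "Xf (Suc i) \<subseteq> G (Suc i)" using Xs(3)[OF fb(2)] .
    also have "\<dots> \<subseteq> Npre n k 1 (G (i - 1))" using RHS_1[OF G fb(3)] D(2) by simp
    finally show ?thesis using fb(1) Fi1 by simp
  qed
  have Fsub: "is_subspace n (F j) \<and> sdim (F j) = j" if j: "j \<in> {1..n}" for j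
  proof (cases "j \<in> set is")
    case True
    then show ?thesis using Fa pflag_sub[OF pf True] by simp
  next
    case False
    have fb: "F j = Xf (Suc j)" "double_entry is (Suc j)" "Suc j \<in> set is" using Fb[OF j False] by auto
    note D = double_props[OF vt fb(2)]
    have "G (Suc j) \<subseteq> Vsp n" using pflag_facts(2)[OF pf] fb(3) by simp
    then have "Xf (Suc j) \<subseteq> Vsp n" using Xs(3)[OF fb(2)] by blast
    moreover have "V.dim (G (Suc j - 2)) = Suc j - 2" using pflag_facts(3)[OF pf D(3)] .
    ultimately show ?thesis using fb(1) Xs(1,4)[OF fb(2)] j unfolding is_subspace_V sdim_V by auto
  qed
  have Fmono: "F (j - 1) \<subseteq> F j" if j: "j \<in> {1..n}" for j
  proof (cases "j \<in> set is")
    case True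
    show ?thesis
    proof (cases "double_entry is j")
      case False
      have p: "prevt is j = j - 1" using tab_single[OF vt tab st True False] .
      then have "j - 1 \<in> insert 0 (set is)" using prevt_props(2)[OF vt True] by simp
      then show ?thesis using Fa True pflag_mono[OF pf True] p by simp
    next
      case d: True
      show ?thesis using Fdbl[OF d] Xs(3)[OF d] Fa True by simp
    qed
  next
    case False
    have fb: "F j = Xf (Suc j)" "double_entry is (Suc j)" "Suc j \<in> set is" using Fb[OF j False] by auto
    note D = double_props[OF vt fb(2)]
    have "j - 1 \<in> insert 0 (set is)" using D(3) by simp
    then show ?thesis using fb(1) Xs(2)[OF fb(2)] Fa by simp
  qed
  have pfF: "pflag n (full_type n) F"
    unfolding pflag_def
  proof (intro conjI ballI allI impI)
    show "F 0 = {0}" using Fa pflag_0[OF pf] by simp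
  next
    fix j assume "j \<in> set (full_type n)"
    then have j: "j \<in> {1..n}" unfolding set_full_type .
    show "is_subspace n (F j)" "sdim (F j) = j" using Fsub[OF j] by auto
    show "F (prevt (full_type n) j) \<subseteq> F j" using Fmono[OF j] prevt_full[OF j] by simp
  next
    fix j assume "j \<notin> insert 0 (set (full_type n))"
    then have "n < j" unfolding set_full_type by auto
    then show "F j = {}" using Fc by simp
  qed
  have NiF: "N_invariant n k (full_type n) F"
    unfolding N_invariant_def
  proof (intro ballI)
    fix j assume "j \<in> set (full_type n)"
    then have j: "j \<in> {1..n}" unfolding set_full_type .
    show "Nop n k ` F j \<subseteq> F (prevt (full_type n) j)"
      using Fung1[OF j] prevt_full[OF j] unfolding Npre_def by auto
  qed
  have SpF: "F \<in> Springer n k" unfolding Springer_def Sp_def using pfF NiF by simp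
  have botphi: "\<exists>x\<in>set (snd S). r = (if double_entry is x then x - 1 else x)"
    if "in_bot (phi is S) r" for r
    using that unfolding in_bot_def phi_def by auto
  have Fung2: "F i = Npre n k 1 (F (i - 2))"
    if i: "i \<in> {1..n}" and h: "in_top (phi is S) i" "in_bot (phi is S) (i - 1)" for i
  proof -
    have "in_top S i" using h(1) in_top_phi by simp
    then have iS: "i \<in> set (fst S)" using i unfolding in_top_def by auto
    then have iis: "i \<in> set is" using tab_in_is[OF tab] by blast
    obtain x where x: "x \<in> set (snd S)" "i - 1 = (if double_entry is x then x - 1 else x)"
      using botphi[OF h(2)] by blast
    show ?thesis
    proof (cases "double_entry is x")
      case False
      then have xi: "x = i - 1" using x(2) by simp
      have i1: "i - 1 \<in> set is" using x(1) xi tab_in_is[OF tab] by blast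
      have "prevt is (i - 1) = i - 1 - 1" using tab_single[OF vt tab st i1] False xi by simp
      then have "i - 2 \<in> insert 0 (set is)" using prevt_props(2)[OF vt i1] by (simp add: numeral_2_eq_2)
      moreover have "G i = Npre n k 1 (G (i - 2))"
        using RHS_2[OF G iis] iS x(1) xi False unfolding in_top_def in_bot_def by simp
      ultimately show ?thesis using Fa iis by simp
    next
      case True
      note D = double_props[OF vt True]
      have "i = x" using x(2) True D(1) i by simp
      then show ?thesis using double_B[OF vt m G True] D(3) Fa iis by simp
    qed
  qed
  have Fung3: "(\<forall>d r. in_bot (phi is S) r \<and> F (i - 1) = Npre n k d (F r) \<longrightarrow>
               F i = Npre n k (d + 1) (F (r - 1))) \<and>
        (\<forall>d j. j < n - 2 * k \<and> F (i - 1) = Npre n k d (Nim n k (n - k - j)) \<longrightarrow>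
               F i = Npre n k d (Nim n k (n - k - j - 1)))"
    if i: "i \<in> {1..n}" and h: "in_top (phi is S) i" "in_top (phi is S) (i - 1)" for i
  proof -
    have ht: "in_top S i" "in_top S (i - 1)" using h in_top_phi by auto
    have iS: "i \<in> set (fst S)" using ht(1) i unfolding in_top_def by auto
    then have iis: "i \<in> set is" using tab_in_is[OF tab] by blast
    have iI: "i \<in> I" unfolding I_def using iis ht by simp
    have p: "prevt is i = i - 1" using top_top_single[OF vt tab st iis ht(2)] by simp
    then have "i - 1 \<in> insert 0 (set is)" using prevt_props(2)[OF vt iis] by simp
    then have Fi: "F i = G i" "F (i - 1) = G (i - 1)" using Fa iis by auto
    show ?thesis
    proof (intro conjI allI impI)
      fix d r assume a: "in_bot (phi is S) r \<and> F (i - 1) = Npre n k d (F r)"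
      obtain x where x: "x \<in> set (snd S)" "r = (if double_entry is x then x - 1 else x)"
        using botphi a by blast
      show "F i = Npre n k (d + 1) (F (r - 1))"
      proof (cases "double_entry is x")
        case False
        then have xr: "x = r" using x(2) by simp
        have r: "r \<in> set is" using x(1) xr tab_in_is[OF tab] by blast
        have "prevt is r = r - 1" using tab_single[OF vt tab st r] False xr by simp
        then have "r - 1 \<in> insert 0 (set is)" using prevt_props(2)[OF vt r] by simp
        moreover have "G (i - 1) = Npre n k d (G r)" using a Fi Fa r by simp
        ultimately show ?thesis
          using RHS_3a[OF G iis ht, of r d] x(1) xr False Fi Fa unfolding in_bot_def by simp
      next
        case True
        note D = double_props[OF vt True]
        have rx: "r = x - 1" using x(2) True by simp
        have "G (i - 1) = Npre n k d (Xf x)" using a Fi Fdbl[OF True] rx by simp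
        then have "G i = Npre n k (Suc d) (G (x - 2))" using Xgen[OF True iI] by blast
        moreover have "r - 1 = x - 2" using rx by simp
        ultimately show ?thesis using Fi Fa D(3) by simp
      qed
    next
      fix d j assume a: "j < n - 2 * k \<and> F (i - 1) = Npre n k d (Nim n k (n - k - j))"
      then show "F i = Npre n k d (Nim n k (n - k - j - 1))"
        using RHS_3b[OF G iis ht, of j d] Fi by simp
    qed
  qed
  have FY: "F \<in> Ycomp n k (phi is S)"
    unfolding Ycomp_def
  proof (intro CollectI conjI ballI impI SpF)
    fix i assume i: "i \<in> {1..n}"
    show "F i \<subseteq> Npre n k 1 (F (i - 1))" using Fung1[OF i] .
    show "in_top (phi is S) i \<and> in_bot (phi is S) (i - 1) \<Longrightarrow> F i = Npre n k 1 (F (i - 2))"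
      using Fung2[OF i] by blast
    show "in_top (phi is S) i \<and> in_top (phi is S) (i - 1) \<Longrightarrow> (\<forall>d r. in_bot (phi is S) r \<and> F (i - 1) = Npre n k d (F r) \<longrightarrow>
               F i = Npre n k (d + 1) (F (r - 1)))"
      using Fung3[OF i] by blast
    show "in_top (phi is S) i \<and> in_top (phi is S) (i - 1) \<Longrightarrow> (\<forall>d j. j < n - 2 * k \<and> F (i - 1) = Npre n k d (Nim n k (n - k - j)) \<longrightarrow>
               F i = Npre n k d (Nim n k (n - k - j - 1)))"
      using Fung3[OF i] by blast
  qed
  have prG: "pr is F = G"
  proof
    fix j
    show "pr is F j = G j"
    proof (cases "j \<in> insert 0 (set is)")
      case True then show ?thesis using pr_eq[OF True] Fa[OF True] by simp
    next
      case False then show ?thesis unfolding pr_def using pflag_junk[OF pf False] by simp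
    qed
  qed
  show ?thesis using FY prG by (intro image_eqI[of _ _ F]) auto
qed

theorem theorem4p7:
  fixes n k :: nat and "is" :: "nat list" and S :: tableau
  assumes "2 * k \<le> n"
    and "valid_type n is"
    and "is_tableau n k is S"
    and "standard_tab S"
  shows "pr is ` Ycomp n k (phi is S) =
    {G. pflag n is G \<and>
        (\<forall>i\<in>set is. G i \<subseteq> Npre n k 1 (G (prevt is i))) \<and>
        (\<forall>i\<in>set is. in_top S i \<and> in_bot S (i - 1) \<and> \<not> double_entry is (i - 1) \<longrightarrow>
             G i = Npre n k 1 (G (i - 2))) \<and>
        (\<forall>i\<in>set is. in_top S i \<and> in_top S (i - 1) \<longrightarrow>
             (\<forall>d r. in_bot S r \<and> \<not> double_entry is r \<and> G (i - 1) = Npre n k d (G r) \<longrightarrow>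
                    G i = Npre n k (d + 1) (G (r - 1))) \<and>
             (\<forall>d j. j < n - 2 * k \<and> G (i - 1) = Npre n k d (Nim n k (n - k - j)) \<longrightarrow>
                    G i = Npre n k d (Nim n k (n - k - j - 1))))}"
proof -
  have "pr is ` Ycomp n k (phi is S) = RHS n k is S"
  proof
    show "pr is ` Ycomp n k (phi is S) \<subseteq> RHS n k is S"
      using subset_dir[OF assms(2-4)] by blast
    show "RHS n k is S \<subseteq> pr is ` Ycomp n k (phi is S)"
      using supset_dir[OF assms] by blast
  qed
  then show ?thesis unfolding RHS_def .
qed

end
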